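(* Let $G=(V,E)$ be a finite graph with boundary $B\subseteq V$, $|B|\ge 2$. Let $L$ be the Laplacian matrix of $G$ and let $N$ be the principal submatrix of $L$ indexed by $B$, with eigenvalues $\mu_1(N)\le\mu_2(N)\le\cdots\le\mu_{|B|}(N)$. Then $$\sigma_k(G,B)\le\mu_k(N),\qquad k=1,2,\ldots,|B|.$$
   Context: $G=(V,E)$ is a finite undirected graph. A boundary is a subset $B\subseteq V$ with $|B|\ge2$. The Laplacian matrix is $L=D-A$, where $D$ is the diagonal degree matrix and $A$ the adjacency matrix. For $f:V\to\mathbb{R}$, $f\neq0$, the Rayleigh quotient is $R(f)=\frac{\sum_{\{x,y\}\in E}(f(x)-f(y))^2}{\sum_{x\in B}f(x)^2}$, interpreted as $+\infty$ if $f$ vanishes on $B$. For $1\le k\le|B|$, the $k$-th Steklov eigenvalue is $\sigma_k(G,B)=\min_{W\subseteq\mathbb{R}^V,\dim W=k}\max_{0\ne f\in W}R(f)$. *)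

theory Defs
  imports "HOL-Analysis.Analysis" "Jordan_Normal_Form.Char_Poly"
begin

text \<open>Finite undirected simple graph on the finite vertex type 'n (V = UNIV),
  given by a symmetric irreflexive adjacency relation E.\<close>

definition simple_graph :: "('n::finite \<Rightarrow> 'n \<Rightarrow> bool) \<Rightarrow> bool" where
  "simple_graph E \<longleftrightarrow> (\<forall>x y. E x y \<longleftrightarrow> E y x) \<and> (\<forall>x. \<not> E x x)"

definition laplacian :: "('n::finite \<Rightarrow> 'n \<Rightarrow> bool) \<Rightarrow> 'n \<Rightarrow> 'n \<Rightarrow> real" where
  "laplacian E x y =
     (if x = y then real (card {z. E x z}) else 0) - (if E x y then 1 else 0)"

text \<open>Dirichlet energy: sum over edges {x,y} of (f x - f y)^2; each unordered
  edge is counted twice in the ordered double sum, hence the factor 1/2.\<close>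
definition edge_energy :: "('n::finite \<Rightarrow> 'n \<Rightarrow> bool) \<Rightarrow> real^'n \<Rightarrow> real" where
  "edge_energy E f = (\<Sum>x\<in>UNIV. \<Sum>y\<in>{y. E x y}. (f$x - f$y)^2) / 2"

definition rayleigh :: "('n::finite \<Rightarrow> 'n \<Rightarrow> bool) \<Rightarrow> 'n set \<Rightarrow> real^'n \<Rightarrow> ereal" where
  "rayleigh E B f =
     (if (\<Sum>x\<in>B. (f$x)^2) = 0 then \<infinity>
      else ereal (edge_energy E f / (\<Sum>x\<in>B. (f$x)^2)))"

definition steklov :: "('n::finite \<Rightarrow> 'n \<Rightarrow> bool) \<Rightarrow> 'n set \<Rightarrow> nat \<Rightarrow> ereal" where
  "steklov E B k =
     (INF W\<in>{W :: (real^'n) set. subspace W \<and> dim W = k}.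
        SUP f\<in>W - {0}. rayleigh E B f)"

text \<open>Principal submatrix of L indexed by B (rows/columns listed in some fixed
  enumeration of B; the eigenvalues do not depend on the enumeration).\<close>
definition boundary_list :: "'n set \<Rightarrow> 'n list" where
  "boundary_list B = (SOME xs. distinct xs \<and> set xs = B)"

definition principal_submatrix :: "('n \<Rightarrow> 'n \<Rightarrow> real) \<Rightarrow> 'n set \<Rightarrow> real Matrix.mat" where
  "principal_submatrix M B =
     (let xs = boundary_list B
      in Matrix.mat (length xs) (length xs) (\<lambda>(i,j). M (xs!i) (xs!j)))"

text \<open>Eigenvalues with multiplicity (roots of the characteristic polynomial),
  in nondecreasing order; mat_eigenvalue A k = mu_k(A) for 1 <= k <= dim.\<close>
definition mat_eigenvalue :: "real Matrix.mat \<Rightarrow> nat \<Rightarrow> real" where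
  "mat_eigenvalue A k = sorted_list_of_multiset (proots (char_poly A)) ! (k - 1)"

end

theory Submission imports Defs begin

lemma eigvec_exists:
  fixes T :: "'a::euclidean_space \<Rightarrow> 'a"
  assumes lin: "linear T" and sym: "\<And>x y. inner (T x) y = inner x (T y)"
    and S: "subspace S" and inv: "\<And>x. x \<in> S \<Longrightarrow> T x \<in> S" and ne: "S \<noteq> {0}"
  shows "\<exists>v\<in>S. norm v = 1 \<and> T v = inner v (T v) *\<^sub>R v"
proof -
  let ?q = "\<lambda>x. inner x (T x)"
  let ?K = "S \<inter> sphere 0 1"
  have cK: "compact ?K"
    using compact_Int_closed[OF compact_sphere closed_subspace[OF S]] by (simp add: Int_commute)
  obtain z where z: "z \<in> S" "z \<noteq> 0" using ne S subspace_0 by blast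
  have "z /\<^sub>R norm z \<in> ?K" using z S by (simp add: subspace_scale)
  hence neK: "?K \<noteq> {}" by blast
  have cont: "continuous_on ?K ?q"
  proof -
    have "continuous_on ?K T" using linear_continuous_on lin linear_conv_bounded_linear by blast
    thus ?thesis by (intro continuous_intros)
  qed
  obtain x0 where x0: "x0 \<in> ?K" and mx: "\<And>y. y \<in> ?K \<Longrightarrow> ?q y \<le> ?q x0"
    using continuous_attains_sup[OF cK neK cont] by blast
  define l where "l = ?q x0"
  have bound: "?q y \<le> l * (norm y)^2" if y: "y \<in> S" for y
  proof (cases "y = 0")
    case True then show ?thesis using lin by (simp add: linear_0)
  next
    case False
    let ?u = "y /\<^sub>R norm y"
    have "?u \<in> ?K" using y False S by (simp add: subspace_scale)
    hence "?q ?u \<le> l" using mx l_def by blast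
    moreover have "?q ?u = ?q y / (norm y)^2"
      using lin False by (simp add: linear_scale power2_eq_square field_simps)
    ultimately have "?q y / (norm y)^2 \<le> l" by simp
    moreover have "(norm y)^2 > 0" using False by simp
    ultimately show ?thesis by (simp add: pos_divide_le_eq mult.commute)
  qed
  define w where "w = T x0 - l *\<^sub>R x0"
  have x0S: "x0 \<in> S" and nx0: "norm x0 = 1" using x0 by auto
  have wS: "w \<in> S" unfolding w_def using x0S inv S by (simp add: subspace_diff subspace_scale)
  have "w = 0"
  proof (rule ccontr)
    assume "w \<noteq> 0"
    define a where "a = inner w w"
    have a: "a > 0" using \<open>w \<noteq> 0\<close> a_def by simp
    define c where "c = ?q w - l * inner w w"
    define t where "t = a / (\<bar>c\<bar> + 1)"
    have t: "t > 0" using a by (simp add: t_def)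
    have zS: "x0 + t *\<^sub>R w \<in> S" using x0S wS S by (simp add: subspace_add subspace_scale)
    have e1: "?q (x0 + t *\<^sub>R w) = ?q x0 + 2 * t * inner w (T x0) + t^2 * ?q w"
      using lin sym[of x0 w]
      by (simp add: linear_add linear_scale algebra_simps power2_eq_square inner_commute)
    have x0x0: "inner x0 x0 = 1" using nx0 by (metis power2_norm_eq_inner power_one)
    have e2: "(norm (x0 + t *\<^sub>R w))^2 = 1 + 2 * t * inner x0 w + t^2 * inner w w"
      unfolding power2_norm_eq_inner using x0x0 by (simp add: algebra_simps power2_eq_square inner_commute)
    have "inner w (T x0) - l * inner x0 w = a"
      unfolding a_def w_def by (simp add: inner_diff_left inner_diff_right algebra_simps inner_commute)
    have le: "?q (x0 + t *\<^sub>R w) \<le> l * (norm (x0 + t *\<^sub>R w))^2" using bound zS .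
    have "l + 2*t*inner w (T x0) + t^2 * ?q w \<le> l * (1 + 2*t*inner x0 w + t^2 * inner w w)"
      using le unfolding e1 e2 l_def by simp
    then have "2*t*(inner w (T x0) - l*inner x0 w) + t^2 * (?q w - l * inner w w) \<le> 0"
      by (simp add: algebra_simps)
    hence "2 * t * a + t^2 * c \<le> 0"
      using \<open>inner w (T x0) - l * inner x0 w = a\<close> c_def by simp
    hence "t * (2 * a + t * c) \<le> 0" by (simp add: algebra_simps power2_eq_square)
    hence h: "2 * a + t * c \<le> 0" using t by (simp add: mult_le_0_iff)
    have "t * \<bar>c\<bar> \<le> a" unfolding t_def using a
      by (simp add: field_simps)
    moreover have "- (t * \<bar>c\<bar>) \<le> t * c"
    proof -
      have "t * (-\<bar>c\<bar>) \<le> t * c" using t by (intro mult_left_mono) auto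
      thus ?thesis by simp
    qed
    ultimately show False using h a by linarith
  qed
  hence "T x0 = l *\<^sub>R x0" unfolding w_def by simp
  thus ?thesis using x0S nx0 l_def by auto
qed

lemma spectral_aux:
  fixes T :: "'a::euclidean_space \<Rightarrow> 'a"
  assumes lin: "linear T" and sym: "\<And>x y. inner (T x) y = inner x (T y)"
  shows "subspace S \<Longrightarrow> (\<And>x. x \<in> S \<Longrightarrow> T x \<in> S) \<Longrightarrow>
    \<exists>vs. distinct vs \<and> set vs \<subseteq> S \<and> span (set vs) = S \<and>
      (\<forall>v\<in>set vs. norm v = 1 \<and> T v = inner v (T v) *\<^sub>R v) \<and>
      (\<forall>u\<in>set vs. \<forall>v\<in>set vs. u \<noteq> v \<longrightarrow> inner u v = 0)"
proof (induction "dim S" arbitrary: S rule: less_induct)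
  case less
  show ?case
  proof (cases "S = {0}")
    case True
    then show ?thesis by (intro exI[of _ "[]"]) auto
  next
    case False
    obtain v where v: "v \<in> S" "norm v = 1" "T v = inner v (T v) *\<^sub>R v"
      using eigvec_exists[OF lin sym less.prems(1) less.prems(2) False] by blast
    define l where "l = inner v (T v)"
    define S' where "S' = {x\<in>S. inner v x = 0}"
    have vv: "inner v v = 1" using v(2) by (metis power2_norm_eq_inner power_one)
    have sub': "subspace S'" unfolding S'_def using less.prems(1)
      by (auto simp: subspace_def inner_add_right)
    have inv': "T x \<in> S'" if "x \<in> S'" for x
    proof -
      have "inner v (T x) = inner (T v) x" using sym by simp
      also have "\<dots> = l * inner v x" using v(3) l_def by (metis inner_scaleR_left)
      finally show ?thesis using that less.prems(2) unfolding S'_def by auto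
    qed
    have "v \<notin> S'" using vv unfolding S'_def by auto
    moreover have "S' \<subseteq> S" unfolding S'_def by auto
    ultimately have "S' \<subset> S" using v(1) by blast
    hence "span S' \<subset> span S" using sub' less.prems(1) by (simp add: span_eq_iff[THEN iffD2])
    hence "dim S' < dim S" by (rule dim_psubset)
    from less.hyps[OF this sub' inv'] obtain vs where vs: "distinct vs" "set vs \<subseteq> S'"
      "span (set vs) = S'" "\<forall>v\<in>set vs. norm v = 1 \<and> T v = inner v (T v) *\<^sub>R v"
      "\<forall>u\<in>set vs. \<forall>v\<in>set vs. u \<noteq> v \<longrightarrow> inner u v = 0" by blast
    have vnot: "v \<notin> set vs" using vs(2) vv unfolding S'_def by auto
    have orth: "\<forall>u\<in>set (v#vs). \<forall>w\<in>set (v#vs). u \<noteq> w \<longrightarrow> inner u w = 0"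
      using vs(2,5) unfolding S'_def by (auto simp: inner_commute)
    have setS: "set (v#vs) \<subseteq> S" using vs(2) v(1) unfolding S'_def by auto
    have "span (set (v#vs)) = S"
    proof (rule span_subspace[OF setS _ less.prems(1)])
      show "S \<subseteq> span (set (v # vs))"
      proof
        fix x assume x: "x \<in> S"
        have "x - inner v x *\<^sub>R v \<in> S'" unfolding S'_def using x v(1) less.prems(1) vv
          by (auto simp: subspace_diff subspace_scale inner_diff_right)
        hence "x - inner v x *\<^sub>R v \<in> span (set vs)" using vs(3) by simp
        hence "x - inner v x *\<^sub>R v \<in> span (set (v#vs))" by (meson set_subset_Cons span_mono subsetD)
        moreover have "inner v x *\<^sub>R v \<in> span (set (v#vs))" by (simp add: span_base span_scale)
        ultimately have "(x - inner v x *\<^sub>R v) + inner v x *\<^sub>R v \<in> span (set (v#vs))"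
          by (rule span_add)
        thus "x \<in> span (set (v#vs))" by simp
      qed
    qed
    thus ?thesis using vs vnot orth setS v by (intro exI[of _ "v#vs"]) auto
  qed
qed

lemma lap_sym: "simple_graph E \<Longrightarrow> laplacian E x y = laplacian E y x"
  unfolding simple_graph_def laplacian_def by auto

lemma nbr_swap:
  fixes E :: "'n::finite \<Rightarrow> 'n \<Rightarrow> bool"
  assumes "simple_graph E"
  shows "(\<Sum>x\<in>UNIV. \<Sum>y\<in>{y. E x y}. h y) = (\<Sum>x\<in>UNIV. real (card {y. E x y}) * (h x :: real))"
proof -
  have "(\<Sum>x\<in>UNIV. \<Sum>y\<in>{y. E x y}. h y) = (\<Sum>x\<in>UNIV. \<Sum>y\<in>UNIV. if E x y then h y else 0)"
    by (simp add: sum.inter_filter[symmetric])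
  also have "\<dots> = (\<Sum>y\<in>UNIV. \<Sum>x\<in>UNIV. if E x y then h y else 0)" by (rule sum.swap)
  also have "\<dots> = (\<Sum>y\<in>UNIV. \<Sum>x\<in>UNIV. if E y x then h y else 0)"
  proof -
    have "\<And>x y. E x y = E y x" using assms unfolding simple_graph_def by blast
    thus ?thesis by simp
  qed
  also have "\<dots> = (\<Sum>y\<in>UNIV. \<Sum>x\<in>{x. E y x}. h y)"
    by (simp add: sum.inter_filter[symmetric])
  also have "\<dots> = (\<Sum>x\<in>UNIV. real (card {y. E x y}) * h x)" by simp
  finally show ?thesis .
qed

lemma lap_row:
  fixes E :: "'n::finite \<Rightarrow> 'n \<Rightarrow> bool"
  shows "(\<Sum>y\<in>UNIV. laplacian E x y * f y) = real (card {y. E x y}) * f x - (\<Sum>y\<in>{y. E x y}. f y)"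
proof -
  have "(\<Sum>y\<in>UNIV. laplacian E x y * f y) =
     (\<Sum>y\<in>UNIV. (if x = y then real (card {z. E x z}) * f y else 0)) - (\<Sum>y\<in>UNIV. if E x y then f y else 0)"
  proof -
    have "\<And>y. laplacian E x y * f y = (if x = y then real (card {z. E x z}) * f y else 0) - (if E x y then f y else 0)"
      unfolding laplacian_def by (auto simp: left_diff_distrib)
    thus ?thesis by (simp add: sum_subtractf)
  qed
  also have "\<dots> = real (card {y. E x y}) * f x - (\<Sum>y\<in>{y. E x y}. f y)"
    by (simp add: sum.inter_filter[symmetric])
  finally show ?thesis .
qed

lemma quad_energy:
  fixes E :: "'n::finite \<Rightarrow> 'n \<Rightarrow> bool"
  assumes sg: "simple_graph E"
  shows "(\<Sum>x\<in>UNIV. f$x * (\<Sum>y\<in>UNIV. laplacian E x y * f$y)) = edge_energy E f"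
proof -
  let ?d = "\<lambda>x. real (card {y. E x y})"
  have A: "(\<Sum>x\<in>UNIV. f$x * (\<Sum>y\<in>UNIV. laplacian E x y * f$y)) =
      (\<Sum>x\<in>UNIV. ?d x * (f$x)^2) - (\<Sum>x\<in>UNIV. \<Sum>y\<in>{y. E x y}. f$x * f$y)"
  proof -
    have "\<And>x. f$x * (\<Sum>y\<in>UNIV. laplacian E x y * f$y) = ?d x * (f$x)^2 - (\<Sum>y\<in>{y. E x y}. f$x * f$y)"
      by (simp add: lap_row[of E _ "\<lambda>y. f$y"] right_diff_distrib sum_distrib_left power2_eq_square mult.left_commute)
    thus ?thesis by (simp add: sum_subtractf)
  qed
  have "(\<Sum>x\<in>UNIV. \<Sum>y\<in>{y. E x y}. (f$x - f$y)^2) =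
     (\<Sum>x\<in>UNIV. \<Sum>y\<in>{y. E x y}. (f$x)^2) + (\<Sum>x\<in>UNIV. \<Sum>y\<in>{y. E x y}. (f$y)^2)
      - 2 * (\<Sum>x\<in>UNIV. \<Sum>y\<in>{y. E x y}. f$x * f$y)"
  proof -
    have P: "\<And>x. (\<Sum>y\<in>{y. E x y}. (f$x - f$y)^2) = (\<Sum>y\<in>{y. E x y}. (f$x)^2) + (\<Sum>y\<in>{y. E x y}. (f$y)^2)
      - 2 * (\<Sum>y\<in>{y. E x y}. f$x * f$y)"
      by (simp add: power2_diff sum.distrib sum_subtractf sum_distrib_left mult.assoc)
    have "(\<Sum>x\<in>UNIV. \<Sum>y\<in>{y. E x y}. (f$x - f$y)^2) = (\<Sum>x\<in>UNIV. (\<Sum>y\<in>{y. E x y}. (f$x)^2) + (\<Sum>y\<in>{y. E x y}. (f$y)^2)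
      - 2 * (\<Sum>y\<in>{y. E x y}. f$x * f$y))" by (intro sum.cong refl P)
    also have "\<dots> = (\<Sum>x\<in>UNIV. \<Sum>y\<in>{y. E x y}. (f$x)^2) + (\<Sum>x\<in>UNIV. \<Sum>y\<in>{y. E x y}. (f$y)^2)
      - (\<Sum>x\<in>UNIV. 2 * (\<Sum>y\<in>{y. E x y}. f$x * f$y))"
      by (simp only: sum.distrib sum_subtractf)
    also have "(\<Sum>x\<in>UNIV. 2 * (\<Sum>y\<in>{y. E x y}. f$x * f$y)) = 2 * (\<Sum>x\<in>UNIV. \<Sum>y\<in>{y. E x y}. f$x * f$y)"
      by (rule sum_distrib_left[symmetric])
    finally show ?thesis .
  qed
  also have "(\<Sum>x\<in>UNIV. \<Sum>y\<in>{y. E x y}. (f$y)^2) = (\<Sum>x\<in>UNIV. ?d x * (f$x)^2)"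
    by (rule nbr_swap[OF sg])
  also have "(\<Sum>x\<in>UNIV. \<Sum>y\<in>{y. E x y}. (f$x)^2) = (\<Sum>x\<in>UNIV. ?d x * (f$x)^2)"
    by simp
  finally have X: "(\<Sum>x\<in>UNIV. \<Sum>y\<in>{y. E x y}. (f$x - f$y)^2) = (\<Sum>x\<in>UNIV. ?d x * (f$x)^2) + (\<Sum>x\<in>UNIV. ?d x * (f$x)^2) - 2 * (\<Sum>x\<in>UNIV. \<Sum>y\<in>{y. E x y}. f$x * f$y)" .
  have h: "\<And>a b :: real. a - b = (a + a - 2 * b) / 2" by simp
  show ?thesis unfolding edge_energy_def A X by (rule h)
qed

definition Top :: "('n::finite \<Rightarrow> 'n \<Rightarrow> bool) \<Rightarrow> 'n set \<Rightarrow> real^'n \<Rightarrow> real^'n" where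
  "Top E B f = (\<chi> x. if x \<in> B then (\<Sum>y\<in>B. laplacian E x y * f$y) else 0)"

definition SB :: "'n::finite set \<Rightarrow> (real^'n) set" where
  "SB B = {f. \<forall>x. x \<notin> B \<longrightarrow> f$x = 0}"

definition ev :: "'n::finite \<Rightarrow> real^'n" where
  "ev x = (\<chi> i. if i = x then 1 else 0)"

lemma sum_if_B: "(\<Sum>x\<in>(UNIV::'n::finite set). if x \<in> B then h x else 0) = (\<Sum>x\<in>B. h x)"
  by (simp add: sum.If_cases)

lemma sum_SB:
  fixes f :: "real^'n::finite"
  assumes "f \<in> SB B"
  shows "(\<Sum>x\<in>UNIV. f$x * h x) = (\<Sum>x\<in>B. f$x * h x)"
proof -
  have "(\<Sum>x\<in>UNIV. f$x * h x) = (\<Sum>x\<in>UNIV. if x \<in> B then f$x * h x else 0)"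
    using assms unfolding SB_def by (intro sum.cong) auto
  thus ?thesis by (simp add: sum_if_B)
qed

lemma Top_nth: "(Top E B f)$x = (if x \<in> B then (\<Sum>y\<in>B. laplacian E x y * f$y) else 0)"
  by (simp add: Top_def)

lemma Top_linear: "linear (Top E B)"
proof (rule linearI)
  fix a b r
  show "Top E B (a + b) = Top E B a + Top E B b"
    unfolding Finite_Cartesian_Product.vec_eq_iff by (simp add: Top_nth sum.distrib algebra_simps)
  show "Top E B (r *\<^sub>R b) = r *\<^sub>R Top E B b"
    unfolding Finite_Cartesian_Product.vec_eq_iff by (simp add: Top_nth sum_distrib_left algebra_simps)
qed

lemma inner_Top_left: "inner (Top E B f) g = (\<Sum>x\<in>B. (\<Sum>y\<in>B. laplacian E x y * f$y) * g$x)"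
proof -
  have "inner (Top E B f) g = (\<Sum>x\<in>UNIV. if x \<in> B then (\<Sum>y\<in>B. laplacian E x y * f$y) * g$x else 0)"
    unfolding inner_vec_def by (intro sum.cong) (auto simp: Top_nth)
  thus ?thesis by (simp add: sum_if_B)
qed

lemma Top_sym:
  assumes sg: "simple_graph E"
  shows "inner (Top E B f) g = inner f (Top E B g)"
proof -
  have "inner (Top E B f) g = (\<Sum>x\<in>B. \<Sum>y\<in>B. laplacian E x y * f$y * g$x)"
    unfolding inner_Top_left by (simp add: sum_distrib_right)
  also have "\<dots> = (\<Sum>y\<in>B. \<Sum>x\<in>B. laplacian E x y * f$y * g$x)" by (rule sum.swap)
  also have "\<dots> = (\<Sum>y\<in>B. (\<Sum>x\<in>B. laplacian E y x * g$x) * f$y)"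
    using lap_sym[OF sg] by (simp add: sum_distrib_right sum_distrib_left mult_ac)
  also have "\<dots> = inner (Top E B g) f"
    unfolding inner_Top_left by simp
  also have "\<dots> = inner f (Top E B g)" by (rule inner_commute)
  finally show ?thesis .
qed

lemma Top_SB: "Top E B f \<in> SB B"
  unfolding Top_def SB_def by simp

lemma SB_subspace: "subspace (SB B)"
  unfolding subspace_def SB_def by simp

lemma energy_SB:
  assumes sg: "simple_graph E" and f: "f \<in> SB B"
  shows "edge_energy E f = inner f (Top E B f)"
proof -
  have r: "(\<Sum>y\<in>UNIV. laplacian E x y * f$y) = (\<Sum>y\<in>B. laplacian E x y * f$y)" for x
    using sum_SB[OF f, of "laplacian E x"] by (simp add: mult.commute)
  have "edge_energy E f = (\<Sum>x\<in>UNIV. f$x * (\<Sum>y\<in>UNIV. laplacian E x y * f$y))"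
    using quad_energy[OF sg] by simp
  also have "\<dots> = (\<Sum>x\<in>B. f$x * (\<Sum>y\<in>B. laplacian E x y * f$y))"
    unfolding r by (rule sum_SB[OF f])
  also have "\<dots> = inner (Top E B f) f"
    unfolding inner_Top_left by (simp add: mult.commute)
  also have "\<dots> = inner f (Top E B f)" by (rule inner_commute)
  finally show ?thesis .
qed

lemma normsq_SB:
  assumes f: "f \<in> SB B"
  shows "(\<Sum>x\<in>B. (f$x)^2) = inner f f"
  unfolding inner_vec_def using sum_SB[OF f, of "\<lambda>x. f$x"] by (simp add: power2_eq_square)

lemma dim_SB: "dim (SB (B::'n::finite set)) = card B"
proof -
  let ?A = "ev ` B"
  have ev_inner: "inner (ev x) (ev y) = (if x = y then 1 else 0)" for x y :: 'n
  proof -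
    have "inner (ev x) (ev y) = (\<Sum>i\<in>UNIV. if i = x then (if x = y then 1 else 0) else 0)"
      unfolding inner_vec_def by (intro sum.cong) (auto simp: ev_def)
    thus ?thesis by simp
  qed
  have inj: "inj_on ev B"
    by (rule inj_onI) (metis ev_inner one_neq_zero)
  have ind: "independent ?A"
  proof (rule pairwise_orthogonal_independent)
    show "pairwise real_inner_class.orthogonal ?A" unfolding pairwise_def real_inner_class.orthogonal_def
    proof (intro ballI impI)
      fix u v assume "u \<in> ?A" "v \<in> ?A" "u \<noteq> v"
      then obtain x y where "u = ev x" "v = ev y" "x \<noteq> y" by auto
      thus "inner u v = 0" using ev_inner by simp
    qed
    show "0 \<notin> ?A" using ev_inner by (metis (no_types, lifting) imageE inner_zero_left zero_neq_one)
  qed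
  have "span ?A = SB B"
  proof (rule span_subspace)
    show "?A \<subseteq> SB B" unfolding SB_def ev_def by auto
    show "subspace (SB B)" by (rule SB_subspace)
    show "SB B \<subseteq> span ?A"
    proof
      fix f assume f: "f \<in> SB B"
      have "f = (\<Sum>x\<in>B. f$x *\<^sub>R ev x)"
      proof (subst Finite_Cartesian_Product.vec_eq_iff, intro allI)
        fix i
        have "(\<Sum>x\<in>B. f$x *\<^sub>R ev x) $ i = (\<Sum>x\<in>B. f$x * (if i = x then 1 else 0))"
          by (simp add: sum_component ev_def)
        also have "\<dots> = (\<Sum>x\<in>B. if x = i then f$x else 0)"
          by (intro sum.cong) auto
        also have "\<dots> = f$i" using f unfolding SB_def by (auto simp: sum.delta)
        finally show "f$i = (\<Sum>x\<in>B. f$x *\<^sub>R ev x) $ i" by simp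
      qed
      also have "\<dots> \<in> span ?A" by (intro span_sum span_scale span_base) auto
      finally show "f \<in> span ?A" .
    qed
  qed
  hence "dim (SB B) = card ?A" using dim_span_eq_card_independent[OF ind] by simp
  also have "\<dots> = card B" using card_image[OF inj] .
  finally show ?thesis .
qed

lemma char_poly_diagonalized:
  fixes N :: "real Matrix.mat"
  assumes N: "N \<in> carrier_mat m m" and P: "P \<in> carrier_mat m m"
    and PtP: "transpose_mat P * P = 1\<^sub>m m" and NP: "N * P = P * D"
    and D: "D = Matrix.mat m m (\<lambda>(i,j). if i = j then ds!i else 0)" and len: "length ds = m"
  shows "char_poly N = (\<Prod>a\<leftarrow>ds. [:-a,1:])"
proof -
  have Dc: "D \<in> carrier_mat m m" using D by simp
  have Pt: "transpose_mat P \<in> carrier_mat m m" using P by simp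
  have PPt: "P * transpose_mat P = 1\<^sub>m m" by (rule mat_mult_left_right_inverse[OF Pt P PtP])
  have "N = N * (P * transpose_mat P)" using N PPt by simp
  also have "\<dots> = (N * P) * transpose_mat P" using N P Pt by (simp add: assoc_mult_mat)
  also have "\<dots> = P * D * transpose_mat P" using NP by simp
  finally have eq: "N = P * D * transpose_mat P" .
  have "similar_mat_wit N D P (transpose_mat P)"
    unfolding similar_mat_wit_def Let_def using N P Pt Dc PPt PtP eq by auto
  hence "similar_mat N D" unfolding similar_mat_def by blast
  hence "char_poly N = char_poly D" by (rule char_poly_similar)
  also have "\<dots> = (\<Prod>a\<leftarrow>diag_mat D. [:-a,1:])"
    by (rule char_poly_upper_triangular[OF Dc]) (auto simp: D)
  also have "diag_mat D = ds" unfolding diag_mat_def D using len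
    by (auto intro: nth_equalityI)
  finally show ?thesis .
qed

lemma proots_linear_prod: "proots (\<Prod>a\<leftarrow>ds. [:-a,1:]) = mset (ds :: real list)"
proof (induction ds)
  case Nil then show ?case by simp
next
  case (Cons a ds)
  have "(\<Prod>a\<leftarrow>ds. [:-a,1:]) \<noteq> (0 :: real poly)" by (auto simp: prod_list_zero_iff)
  hence "proots ([:-a,1:] * (\<Prod>a\<leftarrow>ds. [:-a,1:])) = proots [:-a,1:] + proots (\<Prod>a\<leftarrow>ds. [:-a,1:])"
    by (intro proots_mult) auto
  also have "\<dots> = {#a#} + mset ds" using Cons proots_linear_factor[of "-a"] by simp
  finally show ?case by simp
qed

lemma sum_nth_set: "distinct xs \<Longrightarrow> (\<Sum>l<length xs. g (xs!l)) = (\<Sum>y\<in>set xs. g y)"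
  by (simp add: sum.distinct_set_conv_list sum_list_sum_nth atLeast0LessThan)

lemma rayleigh_bound:
  fixes T :: "'a::euclidean_space \<Rightarrow> 'a"
  assumes lin: "linear T" and fin: "finite U"
    and orth: "\<forall>u\<in>U. \<forall>v\<in>U. u \<noteq> v \<longrightarrow> inner u v = 0" and nrm: "\<forall>u\<in>U. norm u = 1"
    and eig: "\<forall>u\<in>U. T u = inner u (T u) *\<^sub>R u" and le: "\<forall>u\<in>U. inner u (T u) \<le> \<mu>"
    and f: "f \<in> span U"
  shows "inner f (T f) \<le> \<mu> * inner f f"
proof -
  obtain c where fc: "f = (\<Sum>u\<in>U. c u *\<^sub>R u)" using f span_finite[OF fin] by auto
  define l where "l u = inner u (T u)" for u
  have uu: "inner u u = 1" if "u \<in> U" for u using nrm that by (metis power2_norm_eq_inner power_one)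
  have key: "(\<Sum>v\<in>U. g v * inner u v) = g u" if u: "u \<in> U" for u g
  proof -
    have "(\<Sum>v\<in>U. g v * inner u v) = (\<Sum>v\<in>U. if v = u then g u else 0)"
      using orth uu u by (intro sum.cong) auto
    also have "\<dots> = g u" using u fin by simp
    finally show ?thesis .
  qed
  have Tf: "T f = (\<Sum>v\<in>U. (c v * l v) *\<^sub>R v)"
  proof -
    have "T f = (\<Sum>v\<in>U. c v *\<^sub>R T v)" unfolding fc using lin by (simp add: linear_sum linear_scale)
    also have "\<dots> = (\<Sum>v\<in>U. (c v * l v) *\<^sub>R v)"
    proof (intro sum.cong refl)
      fix v assume "v \<in> U"
      hence "T v = l v *\<^sub>R v" using eig unfolding l_def by blast
      thus "c v *\<^sub>R T v = (c v * l v) *\<^sub>R v" by simp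
    qed
    finally show ?thesis .
  qed
  have inner_u: "inner u (\<Sum>v\<in>U. d v *\<^sub>R v) = d u" if "u \<in> U" for u d
    using key[OF that, of d] by (simp add: inner_sum_right mult.commute)
  have q: "inner f (T f) = (\<Sum>u\<in>U. c u * (c u * l u))"
    unfolding Tf by (subst (1) fc) (simp add: inner_sum_left inner_u)
  have n: "inner f f = (\<Sum>u\<in>U. c u * c u)"
  proof -
    have "inner f f = inner (\<Sum>u\<in>U. c u *\<^sub>R u) (\<Sum>v\<in>U. c v *\<^sub>R v)" using fc by simp
    also have "\<dots> = (\<Sum>u\<in>U. c u * c u)" by (simp add: inner_sum_left inner_u)
    finally show ?thesis .
  qed
  have "(\<Sum>u\<in>U. c u * (c u * l u)) \<le> (\<Sum>u\<in>U. c u * c u * \<mu>)"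
  proof (rule sum_mono)
    fix u assume "u \<in> U"
    hence "l u \<le> \<mu>" using le l_def by auto
    moreover have "c u * c u \<ge> 0" by simp
    ultimately have "c u * c u * l u \<le> c u * c u * \<mu>" by (rule mult_left_mono)
    thus "c u * (c u * l u) \<le> c u * c u * \<mu>" by (simp add: mult.assoc)
  qed
  also have "\<dots> = \<mu> * inner f f" unfolding n by (simp add: sum_distrib_left mult.commute)
  finally show ?thesis unfolding q .
qed

theorem mainTheorem4:
  fixes E :: "'n::finite \<Rightarrow> 'n \<Rightarrow> bool" and B :: "'n set" and k :: nat
  assumes "simple_graph E"
    and "card B \<ge> 2"
    and "1 \<le> k" and "k \<le> card B"
  shows "steklov E B k \<le> ereal (mat_eigenvalue (principal_submatrix (laplacian E) B) k)"
proof -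
  note sg = assms(1)
  obtain vs where vs: "distinct vs" "set vs \<subseteq> SB B" "span (set vs) = SB B"
      "\<forall>v\<in>set vs. norm v = 1 \<and> Top E B v = inner v (Top E B v) *\<^sub>R v"
      "\<forall>u\<in>set vs. \<forall>v\<in>set vs. u \<noteq> v \<longrightarrow> inner u v = 0"
    using spectral_aux[OF Top_linear Top_sym[OF sg] SB_subspace Top_SB] by blast
  define lam where "lam v = inner v (Top E B v)" for v
  define ws where "ws = sort_key lam vs"
  have ws_set: "set ws = set vs" and ws_dist: "distinct ws" using vs(1) unfolding ws_def by auto
  have ws_len: "length ws = length vs" unfolding ws_def by simp
  have nz: "0 \<notin> set vs" using vs(4) by fastforce
  have indep: "independent (set vs)"
    by (rule pairwise_orthogonal_independent[OF _ nz])
       (use vs(5) in \<open>auto simp: pairwise_def real_inner_class.orthogonal_def\<close>)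
  have "card B = dim (SB B)" by (simp add: dim_SB)
  also have "\<dots> = card (set vs)" using dim_span_eq_card_independent[OF indep] vs(3) by simp
  also have "\<dots> = length vs" using distinct_card[OF vs(1)] .
  finally have lenB: "length ws = card B" using ws_len by simp
  define ds where "ds = map lam ws"
  have ds_sorted: "sorted ds" unfolding ds_def ws_def by simp
  have ds_len: "length ds = card B" using lenB ds_def by simp
  have wsSB: "ws!j \<in> SB B" if "j < card B" for j using vs(2) ws_set lenB that nth_mem by (metis subsetD)
  have wseig: "Top E B (ws!j) = ds!j *\<^sub>R (ws!j)" if "j < card B" for j
    using vs(4) ws_set lenB that nth_mem ds_def lam_def by (metis nth_map)
  have wsinner: "inner (ws!i) (ws!j) = (if i = j then 1 else 0)" if "i < card B" "j < card B" for i j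
  proof (cases "i = j")
    case True
    have "norm (ws!i) = 1" using vs(4) ws_set lenB that nth_mem by metis
    then show ?thesis using True by (metis power2_norm_eq_inner power_one)
  next
    case False
    hence "ws!i \<noteq> ws!j" using ws_dist lenB that by (simp add: nth_eq_iff_index_eq)
    then show ?thesis using False vs(5) ws_set lenB that nth_mem by metis
  qed
  define xs where "xs = boundary_list B"
  have "\<exists>xs. distinct xs \<and> set xs = B" using finite_distinct_list[of B] by auto
  hence xs: "distinct xs" "set xs = B" unfolding xs_def boundary_list_def by (metis (mono_tags, lifting) someI_ex)+
  define m where "m = length xs"
  have m: "m = card B" unfolding m_def using distinct_card[OF xs(1)] xs(2) by simp
  have xsB: "xs!i \<in> B" if "i < m" for i using xs(2) that m_def nth_mem by blast
  define N where "N = principal_submatrix (laplacian E) B"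
  have N: "N = Matrix.mat m m (\<lambda>(i,j). laplacian E (xs!i) (xs!j))"
    unfolding N_def principal_submatrix_def Let_def xs_def[symmetric] m_def by simp
  define P where "P = Matrix.mat m m (\<lambda>(i,j). (ws!j)$(xs!i))"
  define D where "D = Matrix.mat m m (\<lambda>(i,j). if i = j then ds!i else 0)"
  have Nc: "N \<in> carrier_mat m m" and Pc: "P \<in> carrier_mat m m" unfolding N P_def by auto
  have NP: "N * P = P * D"
  proof (rule eq_matI)
    fix i j assume i: "i < dim_row (P * D)" and j: "j < dim_col (P * D)"
    hence i: "i < m" and j: "j < m" unfolding P_def D_def by auto
    have "(N * P) $$ (i,j) = (\<Sum>l<m. laplacian E (xs!i) (xs!l) * (ws!j)$(xs!l))"
      using i j unfolding N P_def by (simp add: scalar_prod_def atLeast0LessThan)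
    also have "\<dots> = (\<Sum>y\<in>B. laplacian E (xs!i) y * (ws!j)$y)"
      unfolding m_def using sum_nth_set[OF xs(1), of "\<lambda>y. laplacian E (xs!i) y * (ws!j)$y"] xs(2) by simp
    also have "\<dots> = (Top E B (ws!j))$(xs!i)" using xsB[OF i] by (simp add: Top_nth)
    also have "\<dots> = ds!j * (ws!j)$(xs!i)" using wseig[of j] j m by simp
    also have "\<dots> = (P * D) $$ (i,j)"
    proof -
      have "(P * D) $$ (i,j) = (\<Sum>l\<in>{0..<m}. (ws!l)$(xs!i) * (if l = j then ds!l else 0))"
        using i j unfolding P_def D_def by (simp add: scalar_prod_def)
      also have "\<dots> = (\<Sum>l\<in>{0..<m}. if l = j then (ws!j)$(xs!i) * ds!j else 0)"
        by (intro sum.cong) auto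
      also have "\<dots> = (ws!j)$(xs!i) * ds!j" using j by simp
      finally show ?thesis by simp
    qed
    finally show "(N * P) $$ (i,j) = (P * D) $$ (i,j)" .
  qed (auto simp: N P_def D_def)
  have PtP: "transpose_mat P * P = 1\<^sub>m m"
  proof (rule eq_matI)
    fix i j assume i: "i < dim_row (1\<^sub>m m :: real Matrix.mat)" and j: "j < dim_col (1\<^sub>m m :: real Matrix.mat)"
    hence i: "i < m" and j: "j < m" by auto
    have "(transpose_mat P * P) $$ (i,j) = (\<Sum>l<m. (ws!i)$(xs!l) * (ws!j)$(xs!l))"
      using i j unfolding P_def by (simp add: scalar_prod_def atLeast0LessThan)
    also have "\<dots> = (\<Sum>y\<in>B. (ws!i)$y * (ws!j)$y)"
      unfolding m_def using sum_nth_set[OF xs(1), of "\<lambda>y. (ws!i)$y * (ws!j)$y"] xs(2) by simp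
    also have "\<dots> = (\<Sum>y\<in>UNIV. (ws!i)$y * (ws!j)$y)"
      using sum_SB[OF wsSB[of i], of "\<lambda>y. (ws!j)$y"] i m by simp
    also have "\<dots> = inner (ws!i) (ws!j)" by (simp add: inner_vec_def)
    also have "\<dots> = (1\<^sub>m m :: real Matrix.mat) $$ (i,j)" using wsinner[of i j] i j m by simp
    finally show "(transpose_mat P * P) $$ (i,j) = (1\<^sub>m m :: real Matrix.mat) $$ (i,j)" .
  qed (auto simp: P_def)
  have cp: "char_poly N = (\<Prod>a\<leftarrow>ds. [:-a,1:])"
    by (rule char_poly_diagonalized[OF Nc Pc PtP NP D_def]) (simp add: ds_len m)
  have ev_eq: "mat_eigenvalue N k = ds!(k-1)"
    unfolding mat_eigenvalue_def cp proots_linear_prod using ds_sorted by (simp add: sorted_sort_id)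
  define U where "U = set (take k ws)"
  define W where "W = span U"
  have Usub: "U \<subseteq> set vs" unfolding U_def using ws_set by (metis set_take_subset)
  have indU: "independent U" using indep Usub independent_mono by blast
  have dimW: "dim W = k"
  proof -
    have "dim W = card U" unfolding W_def by (rule dim_span_eq_card_independent[OF indU])
    also have "\<dots> = k" unfolding U_def using distinct_card[of "take k ws"] ws_dist lenB assms(4) by simp
    finally show ?thesis .
  qed
  have Wmem: "W \<in> {W :: (real^'n) set. subspace W \<and> dim W = k}"
    using dimW unfolding W_def by simp
  have bound: "rayleigh E B f \<le> ereal (ds!(k-1))" if f: "f \<in> W - {0}" for f
  proof -
    have fSB: "f \<in> SB B" using f Usub vs(3) unfolding W_def by (metis DiffD1 span_mono subsetD)
    have pos: "inner f f > 0" using f by simp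
    have nsq: "(\<Sum>x\<in>B. (f$x)^2) = inner f f" by (rule normsq_SB[OF fSB])
    have en: "edge_energy E f = inner f (Top E B f)" by (rule energy_SB[OF sg fSB])
    have "inner f (Top E B f) \<le> ds!(k-1) * inner f f"
    proof (rule rayleigh_bound[OF Top_linear])
      show "finite U" unfolding U_def by simp
      show "\<forall>u\<in>U. \<forall>v\<in>U. u \<noteq> v \<longrightarrow> inner u v = 0" using vs(5) Usub by blast
      show "\<forall>u\<in>U. norm u = 1" using vs(4) Usub by blast
      show "\<forall>u\<in>U. Top E B u = inner u (Top E B u) *\<^sub>R u" using vs(4) Usub by blast
      show "f \<in> span U" using f W_def by simp
      show "\<forall>u\<in>U. inner u (Top E B u) \<le> ds!(k-1)"
      proof
        fix u assume "u \<in> U"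
        then obtain i where i: "i < length (take k ws)" "u = take k ws ! i" unfolding U_def by (metis in_set_conv_nth)
        hence ik: "i < k" "i < card B" using lenB by auto
        hence "u = ws!i" using i by simp
        hence "inner u (Top E B u) = ds!i" using ik lenB unfolding ds_def lam_def by simp
        also have "\<dots> \<le> ds!(k-1)" using ds_sorted ik assms(3,4) ds_len by (intro sorted_nth_mono) auto
        finally show "inner u (Top E B u) \<le> ds!(k-1)" .
      qed
    qed
    hence "edge_energy E f / inner f f \<le> ds!(k-1)" using pos en by (simp add: pos_divide_le_eq)
    thus ?thesis unfolding rayleigh_def nsq using pos by simp
  qed
  have "steklov E B k \<le> (SUP f\<in>W - {0}. rayleigh E B f)"
    unfolding steklov_def by (rule INF_lower[OF Wmem])
  also have "\<dots> \<le> ereal (ds!(k-1))" by (rule SUP_least) (rule bound)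
  finally show ?thesis unfolding N_def[symmetric] ev_eq .
qed

end
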